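(* Let $Y$ be a set of vectors in a finite-dimensional real vector space which is disconnected, with decomposition $(Y_1,Y_2)$, and suppose that for each $i\in\{1,2\}$, every triple of vectors in $Y_i$ is contained in a full subset of $Y_i$ every subset of which is clean. Then every triple of vectors in $Y$ is contained in a full subset of $Y$ every subset of which is clean.
   Context: $\mathrm{Span}_+$ denotes nonnegative linear combinations. For a set $Z$ of vectors and $B\subseteq Z$: $B$ is closed in $Z$ if $\alpha,\beta\in B$, $\gamma\in\mathrm{Span}_+(\alpha,\beta)\cap Z$ imply $\gamma\in B$; coclosed if $Z\setminus B$ is closed; biclosed if both; weakly separable in $Z$ if $\mathrm{Span}_+(B)\cap\mathrm{Span}_+(Z\setminus B)=\{0\}$. $Z$ is clean if every subset biclosed in $Z$ is weakly separable in $Z$. A subset $F\subseteq Y$ is full in $Y$ if $F\cap\mathrm{Span}\{\alpha,\beta\}=Y\cap\mathrm{Span}\{\alpha,\beta\}$ for all $\alpha,\beta\in F$. $Y$ is disconnected if $Y=Y_1\sqcup Y_2$ with $Y_1,Y_2$ nonempty and both full in $Y$; $(Y_1,Y_2)$ is then a decomposition of $Y$. *)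

theory Defs
  imports "HOL-Analysis.Analysis"
begin

definition pos_span :: "'a::real_vector set \<Rightarrow> 'a set" where
  "pos_span S = {x. \<exists>T c. finite T \<and> T \<subseteq> S \<and> (\<forall>v\<in>T. c v \<ge> 0) \<and>
                        x = (\<Sum>v\<in>T. c v *\<^sub>R v)}"

definition closed_in_set :: "'a::real_vector set \<Rightarrow> 'a set \<Rightarrow> bool" where
  "closed_in_set B Z \<longleftrightarrow> B \<subseteq> Z \<and>
     (\<forall>\<alpha>\<in>B. \<forall>\<beta>\<in>B. \<forall>\<gamma>\<in>pos_span {\<alpha>, \<beta>} \<inter> Z. \<gamma> \<in> B)"

definition coclosed_in_set :: "'a::real_vector set \<Rightarrow> 'a set \<Rightarrow> bool" where
  "coclosed_in_set B Z \<longleftrightarrow> B \<subseteq> Z \<and> closed_in_set (Z - B) Z"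

definition biclosed_in_set :: "'a::real_vector set \<Rightarrow> 'a set \<Rightarrow> bool" where
  "biclosed_in_set B Z \<longleftrightarrow> closed_in_set B Z \<and> coclosed_in_set B Z"

definition weakly_separable :: "'a::real_vector set \<Rightarrow> 'a set \<Rightarrow> bool" where
  "weakly_separable B Z \<longleftrightarrow> B \<subseteq> Z \<and> pos_span B \<inter> pos_span (Z - B) = {0}"

definition clean :: "'a::real_vector set \<Rightarrow> bool" where
  "clean Z \<longleftrightarrow> (\<forall>B. B \<subseteq> Z \<longrightarrow> biclosed_in_set B Z \<longrightarrow> weakly_separable B Z)"

definition full_in :: "'a::real_vector set \<Rightarrow> 'a set \<Rightarrow> bool" where
  "full_in F Y \<longleftrightarrow> F \<subseteq> Y \<and>
     (\<forall>\<alpha>\<in>F. \<forall>\<beta>\<in>F. F \<inter> span {\<alpha>, \<beta>} = Y \<inter> span {\<alpha>, \<beta>})"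

definition decomposition :: "'a::real_vector set \<Rightarrow> 'a set \<Rightarrow> 'a set \<Rightarrow> bool" where
  "decomposition Y Y1 Y2 \<longleftrightarrow> Y = Y1 \<union> Y2 \<and> Y1 \<inter> Y2 = {} \<and> Y1 \<noteq> {} \<and> Y2 \<noteq> {} \<and>
     full_in Y1 Y \<and> full_in Y2 Y"

definition disconnected :: "'a::real_vector set \<Rightarrow> bool" where
  "disconnected Y \<longleftrightarrow> (\<exists>Y1 Y2. decomposition Y Y1 Y2)"

definition triple_property :: "'a::real_vector set \<Rightarrow> bool" where
  "triple_property Y \<longleftrightarrow> (\<forall>\<alpha>\<in>Y. \<forall>\<beta>\<in>Y. \<forall>\<gamma>\<in>Y. \<exists>F. full_in F Y \<and> {\<alpha>, \<beta>, \<gamma>} \<subseteq> F \<and>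
                             (\<forall>Z. Z \<subseteq> F \<longrightarrow> clean Z))"

end

theory Submission
  imports Defs
begin

lemma pos_span_sub_span: "pos_span A \<subseteq> span A"
proof
  fix x assume "x \<in> pos_span A"
  then obtain T c where T: "finite T" "T \<subseteq> A" "x = (\<Sum>v\<in>T. c v *\<^sub>R v)"
    unfolding pos_span_def by blast
  have "(\<Sum>v\<in>T. c v *\<^sub>R v) \<in> span A"
    by (rule span_sum, rule span_scale, rule span_base) (use T in blast)
  thus "x \<in> span A" using T by simp
qed

lemma zero_pos_span: "0 \<in> pos_span A"
  unfolding pos_span_def by (rule CollectI, rule exI[of _ "{}"], auto)

lemma pos_span_union:
  assumes "x \<in> pos_span (A \<union> A')"
  shows "\<exists>u u'. u \<in> pos_span A \<and> u' \<in> pos_span A' \<and> x = u + u'"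
proof -
  from assms obtain T c where T: "finite T" "T \<subseteq> A \<union> A'" "\<forall>v\<in>T. c v \<ge> 0"
    "x = (\<Sum>v\<in>T. c v *\<^sub>R v)" unfolding pos_span_def by blast
  have "x = (\<Sum>v\<in>T \<inter> A. c v *\<^sub>R v) + (\<Sum>v\<in>T - A. c v *\<^sub>R v)"
    using sum.Int_Diff[OF T(1), of "\<lambda>v. c v *\<^sub>R v" A] T(4) by simp
  moreover have "(\<Sum>v\<in>T \<inter> A. c v *\<^sub>R v) \<in> pos_span A"
    unfolding pos_span_def using T by (intro CollectI exI[of _ "T \<inter> A"] exI[of _ c]) auto
  moreover have "(\<Sum>v\<in>T - A. c v *\<^sub>R v) \<in> pos_span A'"
    unfolding pos_span_def using T by (intro CollectI exI[of _ "T - A"] exI[of _ c]) auto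
  ultimately show ?thesis by (intro exI conjI)
qed

lemma closed_restrict:
  assumes "closed_in_set B Z" "Z' \<subseteq> Z"
  shows "closed_in_set (B \<inter> Z') Z'"
  using assms unfolding closed_in_set_def by blast

lemma biclosed_restrict:
  assumes "biclosed_in_set B Z" "Z' \<subseteq> Z"
  shows "biclosed_in_set (B \<inter> Z') Z'"
proof -
  have "closed_in_set ((Z - B) \<inter> Z') Z'"
    using assms closed_restrict unfolding biclosed_in_set_def coclosed_in_set_def by blast
  moreover have "(Z - B) \<inter> Z' = Z' - B \<inter> Z'" using assms(2) by blast
  ultimately show ?thesis
    using assms closed_restrict unfolding biclosed_in_set_def coclosed_in_set_def by auto
qed

lemma full_trans:
  assumes "full_in F Y1" "full_in Y1 Y"
  shows "full_in F Y"
  using assms unfolding full_in_def by blast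

lemma cross:
  fixes x y d :: "'a::real_vector"
  assumes "full_in Y1 Y" "x \<in> Y1" "d \<in> Y1" "d \<in> span {x, y}" "d \<notin> span {x}" "y \<in> Y"
  shows "y \<in> Y1"
proof -
  from assms(4) obtain t where t: "d - t *\<^sub>R y \<in> span {x}"
    using span_breakdown_eq[of d y "{x}"] by (auto simp: insert_commute)
  then obtain s where s: "d - t *\<^sub>R y = s *\<^sub>R x" by (auto simp: span_singleton)
  have "t \<noteq> 0" using s assms(5) by (auto simp: span_singleton)
  hence "y = (1/t) *\<^sub>R (d - s *\<^sub>R x)" using s by (auto simp: algebra_simps)
  hence "y \<in> span {x, d}"
    by (metis span_base span_diff span_scale insertI1 insertI2 singletonI)
  hence "y \<in> Y \<inter> span {x, d}" using assms(6) by blast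
  thus ?thesis using assms(1-3) unfolding full_in_def by blast
qed

lemma full_inD: "full_in F Y \<Longrightarrow> a \<in> F \<Longrightarrow> b \<in> F \<Longrightarrow> F \<inter> span {a, b} = Y \<inter> span {a, b}"
  unfolding full_in_def by blast

lemma full_inS: "full_in F Y \<Longrightarrow> F \<subseteq> Y"
  unfolding full_in_def by blast

lemma tpD:
  assumes "triple_property Y" "a \<in> Y" "b \<in> Y" "c \<in> Y"
  shows "\<exists>F. full_in F Y \<and> {a, b, c} \<subseteq> F \<and> (\<forall>Z. Z \<subseteq> F \<longrightarrow> clean Z)"
  using assms(1)[unfolded triple_property_def, rule_format, OF assms(2-4)] .

lemma cleanD: "clean Z \<Longrightarrow> B \<subseteq> Z \<Longrightarrow> biclosed_in_set B Z \<Longrightarrow> weakly_separable B Z"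
  unfolding clean_def by blast

lemma span_sub: "S \<subseteq> span T \<Longrightarrow> span S \<subseteq> span T"
  by (rule span_minimal) (auto simp: subspace_span)

lemma mixed:
  fixes Y Y1 Y2 :: "'a::euclidean_space set"
  assumes dec: "decomposition Y Y1 Y2"
    and tp1: "triple_property Y1"
    and tp2: "triple_property Y2"
    and a: "a \<in> Y1" and b: "b \<in> Y1" and c: "c \<in> Y2"
  shows "\<exists>F. full_in F Y \<and> {a, b, c} \<subseteq> F \<and> (\<forall>Z. Z \<subseteq> F \<longrightarrow> clean Z)"
proof -
  define V where "V = span {a, b}"
  define W where "W = span {c}"
  define P where "P = Y \<inter> V"
  define L where "L = Y \<inter> W"
  have f1: "full_in Y1 Y" and f2: "full_in Y2 Y" and disj: "Y1 \<inter> Y2 = {}" and YU: "Y = Y1 \<union> Y2"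
    using dec unfolding decomposition_def by auto
  have PY1: "P = Y1 \<inter> V" using full_inD[OF f1 a b] unfolding P_def V_def by simp
  have "Y2 \<inter> span {c, c} = Y \<inter> span {c, c}" using full_inD[OF f2 c c] .
  hence LY2: "L = Y2 \<inter> W" unfolding L_def W_def by simp
  obtain F1 where F1: "full_in F1 Y1" "{a, b, b} \<subseteq> F1" "\<forall>Z. Z \<subseteq> F1 \<longrightarrow> clean Z"
    using tpD[OF tp1 a b b] by blast
  obtain F2 where F2: "full_in F2 Y2" "{c, c, c} \<subseteq> F2" "\<forall>Z. Z \<subseteq> F2 \<longrightarrow> clean Z"
    using tpD[OF tp2 c c c] by blast
  have aF1: "a \<in> F1" and bF1: "b \<in> F1" and cF2: "c \<in> F2" using F1(2) F2(2) by auto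
  have PF1: "P \<subseteq> F1" using full_inD[OF F1(1) aF1 bF1] PY1 unfolding V_def by blast
  have "F2 \<inter> span {c, c} = Y2 \<inter> span {c, c}" using full_inD[OF F2(1) cF2 cF2] .
  hence LF2: "L \<subseteq> F2" using LY2 unfolding W_def by auto
  have cV: "c \<notin> V" using PY1 c disj YU unfolding P_def by blast
  have VW: "V \<inter> W = {0}"
  proof -
    have "v = 0" if hv: "v \<in> V" "v \<in> W" for v
    proof -
      obtain t where t: "v = t *\<^sub>R c" using hv(2) unfolding W_def by (auto simp: span_singleton)
      show ?thesis
      proof (cases "t = 0")
        case False
        hence "c = (1/t) *\<^sub>R v" using t by auto
        hence "c \<in> V" using hv(1) unfolding V_def by (metis span_scale)
        thus ?thesis using cV by blast
      qed (simp add: t)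
    qed
    moreover have "0 \<in> V \<inter> W" unfolding V_def W_def by (simp add: span_zero)
    ultimately show ?thesis by blast
  qed
  define F where "F = P \<union> L"
  have full: "full_in F Y"
    unfolding full_in_def
  proof (intro conjI ballI)
    show "F \<subseteq> Y" unfolding F_def P_def L_def by blast
    fix x y assume x: "x \<in> F" and y: "y \<in> F"
    have "Y \<inter> span {x, y} \<subseteq> F"
    proof
      fix d assume d: "d \<in> Y \<inter> span {x, y}"
      have sV: "span {x, y} \<subseteq> V" if "x \<in> V" "y \<in> V"
        using that unfolding V_def by (intro span_sub) auto
      have sW: "span {x, y} \<subseteq> W" if "x \<in> W" "y \<in> W"
        using that unfolding W_def by (intro span_sub) auto
      have xsV: "span {x} \<subseteq> V" if "x \<in> V" for x
        using that unfolding V_def by (intro span_sub) auto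
      have xsW: "span {x} \<subseteq> W" if "x \<in> W" for x
        using that unfolding W_def by (intro span_sub) auto
      consider "x \<in> P" "y \<in> P" | "x \<in> L" "y \<in> L" | "x \<in> P" "y \<in> L" | "x \<in> L" "y \<in> P"
        using x y unfolding F_def by blast
      then show "d \<in> F"
      proof cases
        case 1 thus ?thesis using d sV unfolding F_def P_def by blast
      next
        case 2 thus ?thesis using d sW unfolding F_def L_def by blast
      next
        case 3
        have xY1: "x \<in> Y1" and yY2: "y \<in> Y2" using 3 PY1 LY2 by auto
        show ?thesis
        proof (cases "d \<in> Y1")
          case True
          show ?thesis
          proof (cases "d \<in> span {x}")
            case True thus ?thesis using d 3 xsV unfolding F_def P_def by blast
          next
            case False
            hence "y \<in> Y1" using cross[OF f1 xY1 \<open>d \<in> Y1\<close> _ False] d YU yY2 by blast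
            thus ?thesis using yY2 disj by blast
          qed
        next
          case False
          hence dY2: "d \<in> Y2" using d YU by blast
          show ?thesis
          proof (cases "d \<in> span {y}")
            case True thus ?thesis using d 3 xsW unfolding F_def L_def by blast
          next
            case False
            have "d \<in> span {y, x}" using d by (simp add: insert_commute)
            hence "x \<in> Y2" using cross[OF f2 yY2 dY2 _ False] YU xY1 by blast
            thus ?thesis using xY1 disj by blast
          qed
        qed
      next
        case 4
        have yY1: "y \<in> Y1" and xY2: "x \<in> Y2" using 4 PY1 LY2 by auto
        show ?thesis
        proof (cases "d \<in> Y1")
          case True
          show ?thesis
          proof (cases "d \<in> span {y}")
            case True thus ?thesis using d 4 xsV unfolding F_def P_def by blast
          next
            case False
            have "d \<in> span {y, x}" using d by (simp add: insert_commute)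
            hence "x \<in> Y1" using cross[OF f1 yY1 \<open>d \<in> Y1\<close> _ False] YU xY2 by blast
            thus ?thesis using xY2 disj by blast
          qed
        next
          case False
          hence dY2: "d \<in> Y2" using d YU by blast
          show ?thesis
          proof (cases "d \<in> span {x}")
            case True thus ?thesis using d 4 xsW unfolding F_def L_def by blast
          next
            case False
            hence "y \<in> Y2" using cross[OF f2 xY2 dY2 _ False] d YU yY1 by blast
            thus ?thesis using yY1 disj by blast
          qed
        qed
      qed
    qed
    moreover have "F \<subseteq> Y" unfolding F_def P_def L_def by blast
    ultimately show "F \<inter> span {x, y} = Y \<inter> span {x, y}" by blast
  qed
  have abc: "{a, b, c} \<subseteq> F"
  proof -
    have "a \<in> V" "b \<in> V" "c \<in> W" unfolding V_def W_def by (auto intro: span_base)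
    thus ?thesis unfolding F_def P_def L_def using a b c YU by blast
  qed
  have cl: "clean Z" if Z: "Z \<subseteq> F" for Z
    unfolding clean_def
  proof (intro allI impI)
    fix B assume BZ: "B \<subseteq> Z" and bc: "biclosed_in_set B Z"
    define Z1 where "Z1 = Z \<inter> P"
    define Z2 where "Z2 = Z \<inter> L"
    have Z12: "Z = Z1 \<union> Z2" using Z unfolding Z1_def Z2_def F_def by blast
    have c1: "clean Z1" by (rule F1(3)[rule_format]) (use PF1 in \<open>auto simp: Z1_def\<close>)
    have c2: "clean Z2" by (rule F2(3)[rule_format]) (use LF2 in \<open>auto simp: Z2_def\<close>)
    have ws1: "weakly_separable (B \<inter> Z1) Z1"
      by (rule cleanD[OF c1]) (use biclosed_restrict[OF bc, of Z1] Z12 in auto)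
    have ws2: "weakly_separable (B \<inter> Z2) Z2"
      by (rule cleanD[OF c2]) (use biclosed_restrict[OF bc, of Z2] Z12 in auto)
    have B12: "(B \<inter> Z1) \<union> (B \<inter> Z2) = B" using BZ Z12 by blast
    have C12: "(Z1 - B \<inter> Z1) \<union> (Z2 - B \<inter> Z2) = Z - B" using Z12 by blast
    have spV: "span Z1 \<subseteq> V" unfolding Z1_def P_def V_def
      by (intro span_sub) auto
    have spW: "span Z2 \<subseteq> W" unfolding Z2_def L_def W_def
      by (intro span_sub) auto
    have "x = 0" if x1: "x \<in> pos_span B" and x2: "x \<in> pos_span (Z - B)" for x
    proof -
      have x1': "x \<in> pos_span ((B \<inter> Z1) \<union> (B \<inter> Z2))" unfolding B12 by (rule x1)
      have x2': "x \<in> pos_span ((Z1 - B \<inter> Z1) \<union> (Z2 - B \<inter> Z2))" unfolding C12 by (rule x2)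
      obtain u1 u2 where u: "u1 \<in> pos_span (B \<inter> Z1)" "u2 \<in> pos_span (B \<inter> Z2)" "x = u1 + u2"
        using pos_span_union[OF x1'] by blast
      obtain w1 w2 where w: "w1 \<in> pos_span (Z1 - B \<inter> Z1)" "w2 \<in> pos_span (Z2 - B \<inter> Z2)" "x = w1 + w2"
        using pos_span_union[OF x2'] by blast
      have inV: "u1 \<in> V" "w1 \<in> V" and inW: "u2 \<in> W" "w2 \<in> W"
      proof -
        have s1: "span (B \<inter> Z1) \<subseteq> span Z1" "span (Z1 - B \<inter> Z1) \<subseteq> span Z1"
          "span (B \<inter> Z2) \<subseteq> span Z2" "span (Z2 - B \<inter> Z2) \<subseteq> span Z2"
          by (rule span_mono, blast)+
        show "u1 \<in> V" using subsetD[OF pos_span_sub_span u(1)] s1(1) spV by (meson subsetD)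
        show "w1 \<in> V" using subsetD[OF pos_span_sub_span w(1)] s1(2) spV by (meson subsetD)
        show "u2 \<in> W" using subsetD[OF pos_span_sub_span u(2)] s1(3) spW by (meson subsetD)
        show "w2 \<in> W" using subsetD[OF pos_span_sub_span w(2)] s1(4) spW by (meson subsetD)
      qed
      have eq: "u1 - w1 = w2 - u2" using u w by (simp add: algebra_simps)
      have "u1 - w1 \<in> V" using inV unfolding V_def by (simp add: span_diff)
      moreover have "u1 - w1 \<in> W" unfolding eq using inW unfolding W_def by (simp add: span_diff)
      ultimately have "u1 - w1 \<in> V \<inter> W" by (rule IntI)
      hence d1: "u1 = w1" using VW by simp
      hence d2: "u2 = w2" using u w by simp
      have "u1 \<in> pos_span (B \<inter> Z1) \<inter> pos_span (Z1 - B \<inter> Z1)" using u(1) w(1) d1 by simp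
      hence "u1 = 0" using ws1 unfolding weakly_separable_def by simp
      moreover have "u2 \<in> pos_span (B \<inter> Z2) \<inter> pos_span (Z2 - B \<inter> Z2)" using u(2) w(2) d2 by simp
      hence "u2 = 0" using ws2 unfolding weakly_separable_def by simp
      ultimately show ?thesis using u by simp
    qed
    thus "weakly_separable B Z" unfolding weakly_separable_def
      using BZ zero_pos_span by blast
  qed
  show ?thesis using full abc cl by blast
qed

lemma decomp_sym: "decomposition Y Y1 Y2 \<Longrightarrow> decomposition Y Y2 Y1"
  unfolding decomposition_def by blast

theorem lemma5p2:
  fixes Y Y1 Y2 :: "'a::euclidean_space set"
  assumes "disconnected Y"
    and "decomposition Y Y1 Y2"
    and "triple_property Y1"
    and "triple_property Y2"
  shows "triple_property Y"
  unfolding triple_property_def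
proof (intro ballI)
  have dec: "decomposition Y Y1 Y2" and dec': "decomposition Y Y2 Y1"
    using assms(2) decomp_sym by auto
  have f1: "full_in Y1 Y" and f2: "full_in Y2 Y" and YU: "Y = Y1 \<union> Y2"
    using dec unfolding decomposition_def by auto
  fix x y z assume xyz: "x \<in> Y" "y \<in> Y" "z \<in> Y"
  note M1 = mixed[OF dec assms(3,4)]
  note M2 = mixed[OF dec' assms(4,3)]
  let ?G = "\<exists>F. full_in F Y \<and> {x, y, z} \<subseteq> F \<and> (\<forall>Z. Z \<subseteq> F \<longrightarrow> clean Z)"
  have all1: ?G if h: "x \<in> Y1" "y \<in> Y1" "z \<in> Y1"
  proof -
    obtain F where "full_in F Y1" "{x, y, z} \<subseteq> F" "\<forall>Z. Z \<subseteq> F \<longrightarrow> clean Z"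
      using assms(3) h unfolding triple_property_def by meson
    thus ?G using full_trans[OF _ f1] by meson
  qed
  have all2: ?G if h: "x \<in> Y2" "y \<in> Y2" "z \<in> Y2"
  proof -
    obtain F where "full_in F Y2" "{x, y, z} \<subseteq> F" "\<forall>Z. Z \<subseteq> F \<longrightarrow> clean Z"
      using assms(4) h unfolding triple_property_def by meson
    thus ?G using full_trans[OF _ f2] by meson
  qed
  have perm: "{a, b, c} = {x, y, z} \<Longrightarrow> \<exists>F. full_in F Y \<and> {a, b, c} \<subseteq> F \<and> (\<forall>Z. Z \<subseteq> F \<longrightarrow> clean Z) \<Longrightarrow> ?G" for a b c
    by simp
  have x: "x \<in> Y1 \<or> x \<in> Y2" and y: "y \<in> Y1 \<or> y \<in> Y2" and z: "z \<in> Y1 \<or> z \<in> Y2"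
    using xyz YU by auto
  show ?G
    using x y z
    apply (elim disjE)
    subgoal using all1 by blast
    subgoal using M1[of x y z] by blast
    subgoal using M1[of x z y] by blast
    subgoal using M2[of y z x] by blast
    subgoal using M1[of y z x] by blast
    subgoal using M2[of x z y] by blast
    subgoal using M2[of x y z] by blast
    subgoal using all2 by blast
    done
qed

end
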